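(* Let $G$ be a graph with vertex set $[n]$, let $\pi\in\mathrm{Ham}(G)$ be a Hamiltonian path of $G$, and let $p=(p_1,\dots,p_n)\in[n]^n$ be a parking preference. Then $p\in\mathrm{FPF}(G)$ with $\mathcal{O}_G(p)=\pi$ if and only if for every $i\in[n]$ we have $p_i\in S_i$, where $S_i:=\{s\in[n] : \pi_s\in B(i,\pi,G)\}$ is the set of positions in $\pi$ occupied by elements of the blocking sequence $B(i,\pi,G)$.
   Context: $[n]=\{1,\dots,n\}$, $S_n$ is the set of permutations of $[n]$ in one-line notation $\pi=\pi_1\cdots\pi_n$. Friendship parking process for a graph $G$ on $[n]$ and a parking preference $p\in[n]^n$: cars $1,\dots,n$ enter in order into spots $1,\dots,n$ (initially empty); spot $k$ is available for car $i$ if it is unoccupied when $i$ enters and each of spots $k-1,k+1$ is unoccupied or occupied by a car adjacent to $i$ in $G$ (spots $0,n+1$ count as unoccupied); car $i$ parks in the first available spot $k\ge p_i$, failing otherwise. $\mathrm{FPF}(G)$ is the set of $p$ for which all cars park; for such $p$, $\mathcal{O}_G(p)=\pi\in S_n$ where $\pi_k$ is the car in spot $k$ at the end. $\mathrm{Ham}(G)$ is the set of permutations $\pi\in S_n$ with $\{\pi_k,\pi_{k+1}\}$ an edge of $G$ for all $k\in[n-1]$. Blockers: for $\pi\in\mathrm{Ham}(G)$ and $i\in[n]$, an element $j=\pi_k$ is a blocker for $i$ in $\pi$ if either (1) $j\le i$, or (2) $j>i$ and there is $\ell\in\{\pi_{k-1},\pi_{k+1}\}$ (a neighbour of $j$ in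 the sequence $\pi$) with $\ell<i$ and $\ell$ not adjacent to $i$ in $G$. The blocking sequence $B(i,\pi,G)$ is the longest contiguous block $\pi_s\pi_{s+1}\cdots\pi_{t}$ of $\pi$ ending at $\pi_t=i$ all of whose elements are blockers for $i$; $b(i,\pi,G)$ denotes its length. *)

theory Defs
  imports Main
begin

(* Graph on [n] = {1..n}: adjacency relation E (assumed symmetric, irreflexive).
   Cars and spots are 1..n.  A parking preference is p :: nat => nat, only p 1..p n matter.
   A configuration occ maps a spot to the car parked there (None = empty). *)

definition spot_available :: "(nat \<Rightarrow> nat \<Rightarrow> bool) \<Rightarrow> nat \<Rightarrow> (nat \<Rightarrow> nat option) \<Rightarrow> nat \<Rightarrow> nat \<Rightarrow> bool" where
  "spot_available E n occ i k \<longleftrightarrow>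
     k \<in> {1..n} \<and> occ k = None \<and>
     (k - 1 < 1 \<or> (case occ (k - 1) of None \<Rightarrow> True | Some c \<Rightarrow> E i c)) \<and>
     (k + 1 > n \<or> (case occ (k + 1) of None \<Rightarrow> True | Some c \<Rightarrow> E i c))"

definition park_car :: "(nat \<Rightarrow> nat \<Rightarrow> bool) \<Rightarrow> nat \<Rightarrow> (nat \<Rightarrow> nat) \<Rightarrow> (nat \<Rightarrow> nat option) \<Rightarrow> nat \<Rightarrow> (nat \<Rightarrow> nat option) option" where
  "park_car E n p occ i =
     (case find (spot_available E n occ i) [p i..<n+1] of
        None \<Rightarrow> None
      | Some k \<Rightarrow> Some (occ(k := Some i)))"

fun park_seq :: "(nat \<Rightarrow> nat \<Rightarrow> bool) \<Rightarrow> nat \<Rightarrow> (nat \<Rightarrow> nat) \<Rightarrow> nat \<Rightarrow> (nat \<Rightarrow> nat option) option" where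
  "park_seq E n p 0 = Some (\<lambda>_. None)"
| "park_seq E n p (Suc m) =
     (case park_seq E n p m of None \<Rightarrow> None | Some occ \<Rightarrow> park_car E n p occ (Suc m))"

definition FPF :: "(nat \<Rightarrow> nat \<Rightarrow> bool) \<Rightarrow> nat \<Rightarrow> (nat \<Rightarrow> nat) set" where
  "FPF E n = {p. (\<forall>i\<in>{1..n}. p i \<in> {1..n}) \<and> park_seq E n p n \<noteq> None}"

definition outcome :: "(nat \<Rightarrow> nat \<Rightarrow> bool) \<Rightarrow> nat \<Rightarrow> (nat \<Rightarrow> nat) \<Rightarrow> nat \<Rightarrow> nat" where
  "outcome E n p k = the (the (park_seq E n p n) k)"

(* permutations of [n] in one-line notation: pi k = pi_k *)
definition Ham :: "(nat \<Rightarrow> nat \<Rightarrow> bool) \<Rightarrow> nat \<Rightarrow> (nat \<Rightarrow> nat) set" where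
  "Ham E n = {\<pi>. bij_betw \<pi> {1..n} {1..n} \<and> (\<forall>k\<in>{1..<n}. E (\<pi> k) (\<pi> (k+1)))}"

definition pos :: "nat \<Rightarrow> (nat \<Rightarrow> nat) \<Rightarrow> nat \<Rightarrow> nat" where
  "pos n \<pi> i = (THE k. k \<in> {1..n} \<and> \<pi> k = i)"

definition blocker_at :: "(nat \<Rightarrow> nat \<Rightarrow> bool) \<Rightarrow> nat \<Rightarrow> (nat \<Rightarrow> nat) \<Rightarrow> nat \<Rightarrow> nat \<Rightarrow> bool" where
  "blocker_at E n \<pi> i k \<longleftrightarrow>
     \<pi> k \<le> i \<or>
     (\<pi> k > i \<and>
       (\<exists>l\<in>{k - 1, k + 1}. l \<in> {1..n} \<and> \<pi> l < i \<and> \<not> E (\<pi> l) i))"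

definition block_start :: "(nat \<Rightarrow> nat \<Rightarrow> bool) \<Rightarrow> nat \<Rightarrow> (nat \<Rightarrow> nat) \<Rightarrow> nat \<Rightarrow> nat" where
  "block_start E n \<pi> i = (LEAST s. 1 \<le> s \<and> (\<forall>r\<in>{s..pos n \<pi> i}. blocker_at E n \<pi> i r))"

definition blocking_seq :: "(nat \<Rightarrow> nat \<Rightarrow> bool) \<Rightarrow> nat \<Rightarrow> (nat \<Rightarrow> nat) \<Rightarrow> nat \<Rightarrow> nat list" where
  "blocking_seq E n \<pi> i = map \<pi> [block_start E n \<pi> i..<pos n \<pi> i + 1]"

definition S_set :: "(nat \<Rightarrow> nat \<Rightarrow> bool) \<Rightarrow> nat \<Rightarrow> (nat \<Rightarrow> nat) \<Rightarrow> nat \<Rightarrow> nat set" where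
  "S_set E n \<pi> i = {s\<in>{1..n}. \<pi> s \<in> set (blocking_seq E n \<pi> i)}"

end

theory Submission imports Defs begin

lemma find_upt_Some:
  "find P [a..<b] = Some k \<longleftrightarrow> a \<le> k \<and> k < b \<and> P k \<and> (\<forall>j. a \<le> j \<and> j < k \<longrightarrow> \<not> P j)"
proof (induction "b - a" arbitrary: a)
  case 0 then show ?case by auto
next
  case (Suc d)
  then have ab: "a < b" by auto
  have eq: "[a..<b] = a # [Suc a..<b]" using ab upt_rec by auto
  show ?case
  proof (cases "P a")
    case True then show ?thesis using ab eq by auto
  next
    case False
    have "find P [a..<b] = find P [Suc a..<b]" using eq False by simp
    also have "\<dots> = Some k \<longleftrightarrow> Suc a \<le> k \<and> k < b \<and> P k \<and> (\<forall>j. Suc a \<le> j \<and> j < k \<longrightarrow> \<not> P j)"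
      using Suc by auto
    finally show ?thesis using False
      by (metis Suc_leD Suc_leI le_antisym nat_less_le not_less_eq_eq)
  qed
qed

lemma park_seq_None_mono: "park_seq E n p m = None \<Longrightarrow> m \<le> m' \<Longrightarrow> park_seq E n p m' = None"
  by (induction m') (auto simp: le_Suc_eq)

lemma park_step:
  assumes "park_seq E n p (Suc m) = Some o'"
  shows "\<exists>oc k. park_seq E n p m = Some oc \<and> spot_available E n oc (Suc m) k \<and> o' = oc(k := Some (Suc m))
     \<and> find (spot_available E n oc (Suc m)) [p (Suc m)..<n+1] = Some k"
proof -
  obtain oc where oc: "park_seq E n p m = Some oc" using assms by (cases "park_seq E n p m") auto
  then have pc: "park_car E n p oc (Suc m) = Some o'" using assms by simp
  then obtain k where k: "find (spot_available E n oc (Suc m)) [p (Suc m)..<n+1] = Some k"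
    and o': "o' = oc(k := Some (Suc m))"
    unfolding park_car_def by (auto split: option.splits)
  then have "spot_available E n oc (Suc m) k"
    using find_upt_Some[of "spot_available E n oc (Suc m)" "p (Suc m)" "n+1" k] by blast
  then show ?thesis using oc k o' by blast
qed

lemma persist:
  assumes "park_seq E n p m = Some oc" "oc k = Some c" "m \<le> m'" "park_seq E n p m' = Some o'"
  shows "o' k = Some c"
  using assms(3,4)
proof (induction m' arbitrary: o')
  case 0 then show ?case using assms by auto
next
  case (Suc m' o')
  show ?case
  proof (cases "m = Suc m'")
    case True then show ?thesis using Suc assms by auto
  next
    case False
    then have "m \<le> m'" using Suc by auto
    from park_step[OF Suc(3)] obtain oc' k' where
      h: "park_seq E n p m' = Some oc'" "spot_available E n oc' (Suc m') k'" "o' = oc'(k' := Some (Suc m'))"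
      by blast
    have "oc' k = Some c" using Suc.IH[OF \<open>m \<le> m'\<close> h(1)] .
    moreover have "oc' k' = None" using h(2) unfolding spot_available_def by auto
    ultimately show ?thesis using h(3) by auto
  qed
qed


definition occ :: "nat \<Rightarrow> (nat \<Rightarrow> nat) \<Rightarrow> nat \<Rightarrow> nat \<Rightarrow> nat option" where
  "occ n \<pi> m k = (if k \<in> {1..n} \<and> \<pi> k \<le> m then Some (\<pi> k) else None)"

context
  fixes E :: "nat \<Rightarrow> nat \<Rightarrow> bool" and n :: nat and \<pi> :: "nat \<Rightarrow> nat"
  assumes sym: "\<And>x y. E x y \<Longrightarrow> E y x"
    and ham: "\<pi> \<in> Ham E n"
begin

lemma bij: "bij_betw \<pi> {1..n} {1..n}" and path: "\<And>k. k \<in> {1..<n} \<Longrightarrow> E (\<pi> k) (\<pi> (k+1))"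
  using ham unfolding Ham_def by auto

lemma inj: "inj_on \<pi> {1..n}" using bij bij_betw_def by blast

lemma range_pi: "k \<in> {1..n} \<Longrightarrow> \<pi> k \<in> {1..n}" using bij bij_betwE by blast

lemma pos_props: assumes "i \<in> {1..n}" shows "pos n \<pi> i \<in> {1..n} \<and> \<pi> (pos n \<pi> i) = i"
proof -
  obtain k where k: "k \<in> {1..n}" "\<pi> k = i" using assms bij by (metis bij_betw_iff_bijections)
  have "\<And>k'. k' \<in> {1..n} \<and> \<pi> k' = i \<Longrightarrow> k' = k" using k inj by (metis inj_onD)
  then have "pos n \<pi> i = k" unfolding pos_def using k by (intro the_equality) auto
  then show ?thesis using k by auto
qed

lemma pos_eq: assumes "k \<in> {1..n}" "\<pi> k = i" shows "k = pos n \<pi> i"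
proof -
  have "i \<in> {1..n}" using assms range_pi by auto
  then show ?thesis using pos_props assms inj by (metis inj_onD)
qed

lemma occ_step: assumes "i \<in> {1..n}"
  shows "(occ n \<pi> (i - 1))(pos n \<pi> i := Some i) = occ n \<pi> i"
proof
  fix k show "((occ n \<pi> (i - 1))(pos n \<pi> i := Some i)) k = occ n \<pi> i k"
  proof (cases "k = pos n \<pi> i")
    case True then show ?thesis using pos_props[OF assms] by (auto simp: occ_def)
  next
    case False
    then have "k \<in> {1..n} \<Longrightarrow> \<pi> k \<noteq> i" using pos_eq by blast
    then show ?thesis using False assms by (auto simp: occ_def)
  qed
qed

lemma avail_pos: assumes "i \<in> {1..n}"
  shows "spot_available E n (occ n \<pi> (i - 1)) i (pos n \<pi> i)"
proof -
  let ?k = "pos n \<pi> i"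
  have k: "?k \<in> {1..n}" "\<pi> ?k = i" using pos_props[OF assms] by auto
  have l: "?k - 1 \<ge> 1 \<Longrightarrow> E i (\<pi> (?k - 1))"
    using path[of "?k - 1"] k sym by auto
  have r: "?k + 1 \<le> n \<Longrightarrow> E i (\<pi> (?k + 1))"
    using path[of "?k"] k by auto
  show ?thesis unfolding spot_available_def occ_def using k l r assms by auto
qed

lemma avail_before: assumes "i \<in> {1..n}" "k \<in> {1..n}" "k < pos n \<pi> i"
  shows "spot_available E n (occ n \<pi> (i - 1)) i k \<longleftrightarrow> \<not> blocker_at E n \<pi> i k"
proof -
  have ne: "\<pi> k \<noteq> i" using pos_eq assms by fastforce
  have kn: "k + 1 \<le> n" using assms pos_props[OF assms(1)] by auto
  have E: "\<And>x. E i x \<longleftrightarrow> E x i" using sym by blast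
  show ?thesis unfolding spot_available_def occ_def blocker_at_def using assms ne kn
    by (auto simp: E)
qed

end

context
  fixes E :: "nat \<Rightarrow> nat \<Rightarrow> bool" and n :: nat and \<pi> :: "nat \<Rightarrow> nat"
  assumes sym: "\<And>x y. E x y \<Longrightarrow> E y x"
    and ham: "\<pi> \<in> Ham E n"
begin

lemma bs_props: assumes "i \<in> {1..n}"
  shows "1 \<le> block_start E n \<pi> i \<and> block_start E n \<pi> i \<le> pos n \<pi> i
     \<and> (\<forall>r\<in>{block_start E n \<pi> i..pos n \<pi> i}. blocker_at E n \<pi> i r)"
proof -
  let ?P = "\<lambda>s. 1 \<le> s \<and> (\<forall>r\<in>{s..pos n \<pi> i}. blocker_at E n \<pi> i r)"
  have pp: "pos n \<pi> i \<in> {1..n}" "\<pi> (pos n \<pi> i) = i" using pos_props[OF sym ham assms] by auto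
  have "?P (pos n \<pi> i)" using pp by (auto simp: blocker_at_def)
  then have "?P (block_start E n \<pi> i)" "block_start E n \<pi> i \<le> pos n \<pi> i"
    unfolding block_start_def by (rule LeastI, rule Least_le)
  then show ?thesis by auto
qed

lemma S_char: assumes "i \<in> {1..n}"
  shows "q \<in> S_set E n \<pi> i \<longleftrightarrow> q \<in> {1..n} \<and> block_start E n \<pi> i \<le> q \<and> q \<le> pos n \<pi> i"
proof -
  have b: "1 \<le> block_start E n \<pi> i" "block_start E n \<pi> i \<le> pos n \<pi> i" using bs_props[OF assms] by auto
  have pp: "pos n \<pi> i \<in> {1..n}" using pos_props[OF sym ham assms] by auto
  have inj: "inj_on \<pi> {1..n}" using inj[OF sym ham] .
  show ?thesis
  proof
    assume "q \<in> S_set E n \<pi> i"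
    then obtain r where r: "q \<in> {1..n}" "block_start E n \<pi> i \<le> r" "r \<le> pos n \<pi> i" "\<pi> q = \<pi> r"
      unfolding S_set_def blocking_seq_def by auto
    then have "r \<in> {1..n}" using b pp by auto
    then have "q = r" using r inj by (metis inj_onD)
    then show "q \<in> {1..n} \<and> block_start E n \<pi> i \<le> q \<and> q \<le> pos n \<pi> i" using r by auto
  next
    assume h: "q \<in> {1..n} \<and> block_start E n \<pi> i \<le> q \<and> q \<le> pos n \<pi> i"
    then have "q \<in> set [block_start E n \<pi> i..<pos n \<pi> i + 1]" by auto
    then have "\<pi> q \<in> set (map \<pi> [block_start E n \<pi> i..<pos n \<pi> i + 1])" by auto
    then show "q \<in> S_set E n \<pi> i" using h unfolding S_set_def blocking_seq_def by auto
  qed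
qed

lemma core: assumes "i \<in> {1..n}" "q \<in> {1..n}"
  shows "find (spot_available E n (occ n \<pi> (i - 1)) i) [q..<n+1] = Some (pos n \<pi> i)
    \<longleftrightarrow> q \<in> S_set E n \<pi> i"
proof -
  let ?A = "spot_available E n (occ n \<pi> (i - 1)) i"
  have pp: "pos n \<pi> i \<in> {1..n}" using pos_props[OF sym ham assms(1)] by auto
  have av: "?A (pos n \<pi> i)" using avail_pos[OF sym ham assms(1)] .
  have ab: "\<And>k. q \<le> k \<Longrightarrow> k < pos n \<pi> i \<Longrightarrow> ?A k \<longleftrightarrow> \<not> blocker_at E n \<pi> i k"
    using avail_before[OF sym ham assms(1)] assms pp by auto
  have "find ?A [q..<n+1] = Some (pos n \<pi> i) \<longleftrightarrow> q \<le> pos n \<pi> i \<and> (\<forall>j. q \<le> j \<and> j < pos n \<pi> i \<longrightarrow> blocker_at E n \<pi> i j)"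
    using find_upt_Some[of ?A q "n+1" "pos n \<pi> i"] av pp ab by auto
  also have "\<dots> \<longleftrightarrow> block_start E n \<pi> i \<le> q \<and> q \<le> pos n \<pi> i"
  proof
    assume h: "q \<le> pos n \<pi> i \<and> (\<forall>j. q \<le> j \<and> j < pos n \<pi> i \<longrightarrow> blocker_at E n \<pi> i j)"
    have "\<pi> (pos n \<pi> i) = i" using pos_props[OF sym ham assms(1)] by auto
    then have "blocker_at E n \<pi> i (pos n \<pi> i)" by (simp add: blocker_at_def)
    then have "1 \<le> q \<and> (\<forall>r\<in>{q..pos n \<pi> i}. blocker_at E n \<pi> i r)"
      using h assms(2) by (metis atLeastAtMost_iff atLeastAtMost_iff nat_less_le)
    then have "block_start E n \<pi> i \<le> q" unfolding block_start_def by (rule Least_le)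
    then show "block_start E n \<pi> i \<le> q \<and> q \<le> pos n \<pi> i" using h by auto
  next
    assume "block_start E n \<pi> i \<le> q \<and> q \<le> pos n \<pi> i"
    then show "q \<le> pos n \<pi> i \<and> (\<forall>j. q \<le> j \<and> j < pos n \<pi> i \<longrightarrow> blocker_at E n \<pi> i j)"
      using bs_props[OF assms(1)] by auto
  qed
  also have "\<dots> \<longleftrightarrow> q \<in> S_set E n \<pi> i" using S_char[OF assms(1)] assms(2) by auto
  finally show ?thesis .
qed

end

theorem theorem2p6:
  fixes E :: "nat \<Rightarrow> nat \<Rightarrow> bool" and n :: nat and \<pi> p :: "nat \<Rightarrow> nat"
  assumes sym: "\<And>x y. E x y \<Longrightarrow> E y x"
    and irrefl: "\<And>x. \<not> E x x"
    and ham: "\<pi> \<in> Ham E n"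
    and pref: "\<forall>i\<in>{1..n}. p i \<in> {1..n}"
  shows "(p \<in> FPF E n \<and> (\<forall>k\<in>{1..n}. outcome E n p k = \<pi> k))
           \<longleftrightarrow> (\<forall>i\<in>{1..n}. p i \<in> S_set E n \<pi> i)"
proof -
  have occ0: "occ n \<pi> 0 = (\<lambda>_. None)"
    using range_pi[OF sym ham] by (fastforce simp: occ_def fun_eq_iff)
  show ?thesis
  proof
    assume h: "p \<in> FPF E n \<and> (\<forall>k\<in>{1..n}. outcome E n p k = \<pi> k)"
    then obtain oF where oF: "park_seq E n p n = Some oF" unfolding FPF_def by auto
    have out: "\<And>k. k \<in> {1..n} \<Longrightarrow> the (oF k) = \<pi> k" using h oF unfolding outcome_def by auto
    have "\<forall>m\<le>n. park_seq E n p m = Some (occ n \<pi> m) \<and> (\<forall>i\<in>{1..m}. p i \<in> S_set E n \<pi> i)"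
    proof (intro allI impI)
      fix m assume "m \<le> n"
      then show "park_seq E n p m = Some (occ n \<pi> m) \<and> (\<forall>i\<in>{1..m}. p i \<in> S_set E n \<pi> i)"
      proof (induction m)
        case 0 then show ?case using occ0 by simp
      next
        case (Suc m)
        have IH: "park_seq E n p m = Some (occ n \<pi> m)" "\<forall>i\<in>{1..m}. p i \<in> S_set E n \<pi> i"
          using Suc by auto
        have i: "Suc m \<in> {1..n}" using Suc by auto
        have "park_seq E n p (Suc m) \<noteq> None" using park_seq_None_mono[of E n p "Suc m" n] Suc oF by auto
        then obtain o' where o': "park_seq E n p (Suc m) = Some o'" by auto
        from park_step[OF o'] obtain oc k where st:
          "park_seq E n p m = Some oc" "spot_available E n oc (Suc m) k" "o' = oc(k := Some (Suc m))"
          "find (spot_available E n oc (Suc m)) [p (Suc m)..<n+1] = Some k" by blast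
        have oc: "oc = occ n \<pi> m" using st(1) IH(1) by simp
        have k: "k \<in> {1..n}" using st(2) unfolding spot_available_def by auto
        have "oF k = Some (Suc m)" using persist[OF o' _ _ oF, of k "Suc m"] st(3) Suc(2) by auto
        then have "\<pi> k = Suc m" using out[OF k] by simp
        then have kp: "k = pos n \<pi> (Suc m)" using pos_eq[OF sym ham k] by simp
        have "p (Suc m) \<in> S_set E n \<pi> (Suc m)"
          using core[OF sym ham i, of "p (Suc m)"] pref i st(4) oc kp by auto
        moreover have "o' = occ n \<pi> (Suc m)" using occ_step[OF sym ham i] st(3) oc kp by simp
        ultimately show ?case using IH(2) o' by (auto simp: le_Suc_eq)
      qed
    qed
    then show "\<forall>i\<in>{1..n}. p i \<in> S_set E n \<pi> i" by auto
  next
    assume h: "\<forall>i\<in>{1..n}. p i \<in> S_set E n \<pi> i"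
    have "\<forall>m\<le>n. park_seq E n p m = Some (occ n \<pi> m)"
    proof (intro allI impI)
      fix m assume "m \<le> n"
      then show "park_seq E n p m = Some (occ n \<pi> m)"
      proof (induction m)
        case 0 then show ?case using occ0 by simp
      next
        case (Suc m)
        have i: "Suc m \<in> {1..n}" using Suc by auto
        have f: "find (spot_available E n (occ n \<pi> m) (Suc m)) [p (Suc m)..<n+1] = Some (pos n \<pi> (Suc m))"
          using core[OF sym ham i, of "p (Suc m)"] pref h i by auto
        have "park_seq E n p (Suc m) = Some ((occ n \<pi> m)(pos n \<pi> (Suc m) := Some (Suc m)))"
          using Suc f by (simp add: park_car_def)
        then show ?case using occ_step[OF sym ham i] by simp
      qed
    qed
    then have pn: "park_seq E n p n = Some (occ n \<pi> n)" by auto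
    have "\<forall>k\<in>{1..n}. outcome E n p k = \<pi> k"
      using pn range_pi[OF sym ham] unfolding outcome_def occ_def by auto
    then show "p \<in> FPF E n \<and> (\<forall>k\<in>{1..n}. outcome E n p k = \<pi> k)"
      using pn pref unfolding FPF_def by auto
  qed
qed

end
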